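(* Let $n\ge 1$. Every probability distribution $p$ on $\{0,1\}^n$ can be approximated arbitrarily well by the visible marginal distribution of an RBM with $n$ visible units and $\frac{2^n}{2}-1$ hidden units; that is, for every $\varepsilon>0$ there exist parameters $W,B,C$ of such an RBM whose visible marginal $q$ satisfies $D(p\,\|\,q)<\varepsilon$.
   Context: A Restricted Boltzmann Machine (RBM) with $n$ visible units and $m$ hidden units has parameters $W\in\mathbb{R}^{m\times n}$, $B\in\mathbb{R}^n$, $C\in\mathbb{R}^m$, and defines the joint distribution $p(v,h)=\frac{1}{Z}\exp(h^T W v + B\cdot v + C\cdot h)$ on $(v,h)\in\{0,1\}^n\times\{0,1\}^m$, where $Z$ is the normalizing constant; its visible marginal distribution is $q(v)=\sum_{h\in\{0,1\}^m}p(v,h)$. $D(p\|q)=\sum_v p(v)\log\frac{p(v)}{q(v)}$ denotes the Kullback–Leibler divergence. *)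

theory Defs
  imports "HOL-Analysis.Analysis"
begin

definition binvecs :: "nat \<Rightarrow> (nat \<Rightarrow> real) set" where
  "binvecs k = {0..<k} \<rightarrow>\<^sub>E {0, 1}"

definition rbm_weight ::
  "nat \<Rightarrow> nat \<Rightarrow> (nat \<Rightarrow> nat \<Rightarrow> real) \<Rightarrow> (nat \<Rightarrow> real) \<Rightarrow> (nat \<Rightarrow> real)
   \<Rightarrow> (nat \<Rightarrow> real) \<Rightarrow> (nat \<Rightarrow> real) \<Rightarrow> real" where
  "rbm_weight n m W B C v h =
     exp ((\<Sum>i<m. \<Sum>j<n. h i * W i j * v j) + (\<Sum>j<n. B j * v j) + (\<Sum>i<m. C i * h i))"

definition rbm_Z ::
  "nat \<Rightarrow> nat \<Rightarrow> (nat \<Rightarrow> nat \<Rightarrow> real) \<Rightarrow> (nat \<Rightarrow> real) \<Rightarrow> (nat \<Rightarrow> real) \<Rightarrow> real" where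
  "rbm_Z n m W B C = (\<Sum>v\<in>binvecs n. \<Sum>h\<in>binvecs m. rbm_weight n m W B C v h)"

definition rbm_joint ::
  "nat \<Rightarrow> nat \<Rightarrow> (nat \<Rightarrow> nat \<Rightarrow> real) \<Rightarrow> (nat \<Rightarrow> real) \<Rightarrow> (nat \<Rightarrow> real)
   \<Rightarrow> (nat \<Rightarrow> real) \<Rightarrow> (nat \<Rightarrow> real) \<Rightarrow> real" where
  "rbm_joint n m W B C v h = rbm_weight n m W B C v h / rbm_Z n m W B C"

definition rbm_marginal ::
  "nat \<Rightarrow> nat \<Rightarrow> (nat \<Rightarrow> nat \<Rightarrow> real) \<Rightarrow> (nat \<Rightarrow> real) \<Rightarrow> (nat \<Rightarrow> real)
   \<Rightarrow> (nat \<Rightarrow> real) \<Rightarrow> real" where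
  "rbm_marginal n m W B C v = (\<Sum>h\<in>binvecs m. rbm_joint n m W B C v h)"

definition is_distribution :: "'a set \<Rightarrow> ('a \<Rightarrow> real) \<Rightarrow> bool" where
  "is_distribution S p \<longleftrightarrow> (\<forall>x\<in>S. p x \<ge> 0) \<and> (\<Sum>x\<in>S. p x) = 1"

definition KL_div :: "'a set \<Rightarrow> ('a \<Rightarrow> real) \<Rightarrow> ('a \<Rightarrow> real) \<Rightarrow> real" where
  "KL_div S p q = (\<Sum>x\<in>S. if p x = 0 then 0 else p x * ln (p x / q x))"

end

theory Submission
  imports Defs
begin



definition Ffun :: "nat \<Rightarrow> nat \<Rightarrow> (nat \<Rightarrow> nat \<Rightarrow> real) \<Rightarrow> (nat \<Rightarrow> real) \<Rightarrow> (nat \<Rightarrow> real)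
   \<Rightarrow> (nat \<Rightarrow> real) \<Rightarrow> real" where
  "Ffun n m W B C v = exp (\<Sum>j<n. B j * v j) * (\<Prod>i<m. 1 + exp ((\<Sum>j<n. W i j * v j) + C i))"

lemma finite_binvecs: "finite (binvecs k)"
  unfolding binvecs_def by (simp add: finite_PiE)

lemma Ffun_pos: "Ffun n m W B C v > 0"
  unfolding Ffun_def by (intro mult_pos_pos prod_pos) (auto intro: add_pos_pos)

lemma sum_weight: "(\<Sum>h\<in>binvecs m. rbm_weight n m W B C v h) = Ffun n m W B C v"
proof -
  have "\<And>h. rbm_weight n m W B C v h = exp (\<Sum>j<n. B j * v j) *
      (\<Prod>i\<in>{0..<m}. exp (h i * ((\<Sum>j<n. W i j * v j) + C i)))"
  proof -
    fix h
    have "(\<Sum>i<m. \<Sum>j<n. h i * W i j * v j) + (\<Sum>j<n. B j * v j) + (\<Sum>i<m. C i * h i)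
      = (\<Sum>j<n. B j * v j) + (\<Sum>i\<in>{0..<m}. h i * ((\<Sum>j<n. W i j * v j) + C i))"
      by (simp add: atLeast0LessThan sum.distrib sum_distrib_left algebra_simps)
    note eq = this
    show "?thesis h" unfolding rbm_weight_def eq by (simp only: exp_add exp_sum[OF finite_atLeastLessThan])
  qed
  hence "(\<Sum>h\<in>binvecs m. rbm_weight n m W B C v h) = exp (\<Sum>j<n. B j * v j) *
      (\<Sum>h\<in>binvecs m. \<Prod>i\<in>{0..<m}. exp (h i * ((\<Sum>j<n. W i j * v j) + C i)))"
    by (simp add: sum_distrib_left)
  also have "(\<Sum>h\<in>binvecs m. \<Prod>i\<in>{0..<m}. exp (h i * ((\<Sum>j<n. W i j * v j) + C i)))
     = (\<Prod>i\<in>{0..<m}. \<Sum>x\<in>{0,1::real}. exp (x * ((\<Sum>j<n. W i j * v j) + C i)))"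
    unfolding binvecs_def by (rule prod_sum_PiE[symmetric]) auto
  also have "\<dots> = (\<Prod>i<m. 1 + exp ((\<Sum>j<n. W i j * v j) + C i))"
    by (simp add: atLeast0LessThan)
  finally show ?thesis unfolding Ffun_def .
qed

lemma marginal_eq: "rbm_marginal n m W B C v = Ffun n m W B C v / (\<Sum>u\<in>binvecs n. Ffun n m W B C u)"
  unfolding rbm_marginal_def rbm_joint_def rbm_Z_def
  by (simp add: sum_divide_distrib[symmetric] sum_weight)

lemma kl_bound:
  fixes S :: "'a set" and F :: "'a \<Rightarrow> real"
  assumes "finite S" "is_distribution S p" "K > 0" "\<And>v. v \<in> S \<Longrightarrow> F v > 0"
    "\<And>v. v \<in> S \<Longrightarrow> K * p v \<le> F v" "sum F S \<le> K * exp (e/2)" "e > 0"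
  shows "KL_div S p (\<lambda>v. F v / sum F S) < e"
proof -
  have t: "(if p v = 0 then 0 else p v * ln (p v / (F v / sum F S))) \<le> p v * (e/2)" if v: "v \<in> S" for v
  proof (cases "p v = 0")
    case True thus ?thesis by simp
  next
    case False
    have pp: "p v > 0" using False assms(2) v unfolding is_distribution_def by force
    have Zp: "sum F S > 0" using v assms(1,4) by (metis sum_pos2 less_le)
    have Fv: "F v > 0" using assms(4) v by auto
    have "p v / (F v / sum F S) = p v * sum F S / F v" by simp
    also have "\<dots> \<le> p v * (K * exp (e/2)) / (K * p v)"
    proof (rule frac_le)
      show "0 \<le> p v * (K * exp (e / 2))" using pp assms(3) by simp
      show "p v * sum F S \<le> p v * (K * exp (e / 2))" using pp assms(6) by simp
      show "0 < K * p v" using pp assms(3) by simp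
      show "K * p v \<le> F v" using assms(5) v by simp
    qed
    also have "\<dots> = exp (e/2)" using pp assms(3) by simp
    finally have "ln (p v / (F v / sum F S)) \<le> ln (exp (e/2))"
      using pp Fv Zp by (subst ln_le_cancel_iff) auto
    hence "ln (p v / (F v / sum F S)) \<le> e/2" by simp
    thus ?thesis using False pp by (simp add: mult_left_mono)
  qed
  have "KL_div S p (\<lambda>v. F v / sum F S) \<le> (\<Sum>v\<in>S. p v * (e/2))"
    unfolding KL_div_def by (rule sum_mono) (use t in auto)
  also have "\<dots> = (\<Sum>v\<in>S. p v) * (e/2)" by (rule sum_distrib_right[symmetric])
  also have "\<dots> = e/2" using assms(2) unfolding is_distribution_def by simp
  finally show ?thesis using assms(7) by simp
qed




definition tailv :: "nat \<Rightarrow> nat \<Rightarrow> nat \<Rightarrow> real" where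
  "tailv N k = (\<lambda>j. if j \<in> {1..<Suc N} then of_bool (bit k (j-1)) else undefined)"

lemma tailv_inj:
  assumes "k < 2^N" "k' < 2^N" "tailv N k = tailv N k'"
  shows "k = k'"
proof -
  have b: "bit k j = bit k' j" if "j < N" for j
  proof -
    have "tailv N k (Suc j) = tailv N k' (Suc j)" using assms(3) by simp
    hence "of_bool (bit k j) = (of_bool (bit k' j)::real)" using that unfolding tailv_def by simp
    thus ?thesis by (metis of_bool_eq_iff)
  qed
  have "take_bit N k = take_bit N k'"
    by (rule bit_eqI) (auto simp: bit_take_bit_iff b)
  thus ?thesis using assms(1,2) by (simp add: take_bit_nat_eq_self)
qed

lemma tailv_mem: "tailv N k \<in> {1..<Suc N} \<rightarrow>\<^sub>E {0,1::real}"
  unfolding tailv_def by auto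

lemma tailv_surj:
  assumes "t \<in> {1..<Suc N} \<rightarrow>\<^sub>E {0,1::real}"
  shows "\<exists>k<2^N. tailv N k = t"
proof -
  have inj: "inj_on (tailv N) {0..<2^N}"
    by (intro inj_onI tailv_inj) auto
  have sub: "tailv N ` {0..<2^N} \<subseteq> {1..<Suc N} \<rightarrow>\<^sub>E {0,1::real}"
    using tailv_mem by auto
  have c1: "card (tailv N ` {0..<2^N}) = 2^N" using card_image[OF inj] by simp
  have c2: "card ({1..<Suc N} \<rightarrow>\<^sub>E {0,1::real}) = 2^N"
    by (simp add: card_PiE numeral_2_eq_2)
  have "tailv N ` {0..<2^N} = {1..<Suc N} \<rightarrow>\<^sub>E {0,1::real}"
  proof (rule card_subset_eq)
    show "finite ({1..<Suc N} \<rightarrow>\<^sub>E {0,1::real})" by (rule finite_PiE) auto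
  qed (use sub c1 c2 in simp_all)
  hence "t \<in> tailv N ` {0..<2^N}" using assms by simp
  thus ?thesis by auto
qed



lemma exp_lim0: "d > 0 \<Longrightarrow> ((\<lambda>l::real. exp (c - l*d)) \<longlongrightarrow> 0) at_top"
proof -
  assume d: "d > 0"
  have "filterlim (\<lambda>l::real. l*d) at_top at_top"
    using d by (intro filterlim_at_top_mult_tendsto_pos[OF tendsto_const] filterlim_ident) auto
  hence "filterlim (\<lambda>l::real. -c + l*d) at_top at_top"
    by (intro filterlim_tendsto_add_at_top[OF tendsto_const])
  hence "filterlim (\<lambda>l::real. - (-c + l*d)) at_bot at_top"
    by (simp only: filterlim_uminus_at_top)
  hence "filterlim (\<lambda>l::real. c - l*d) at_bot at_top" by simp
  thus ?thesis by (rule filterlim_compose[OF exp_at_bot])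
qed



lemma sum_split0: "(\<Sum>j<Suc N. f j) = f 0 + (\<Sum>j\<in>{1..<Suc N}. (f j :: real))"
  by (simp add: lessThan_atLeast0 sum.atLeast_Suc_lessThan)

lemma prod_unique:
  fixes e :: "nat \<Rightarrow> real"
  assumes "finite I" "i0 \<in> I" "\<And>i. i \<in> I \<Longrightarrow> P i \<Longrightarrow> i = i0" "P i0"
  shows "(\<Prod>i\<in>I. 1 + (if P i then e i else 0)) = 1 + e i0"
proof -
  have "(\<Prod>i\<in>I. 1 + (if P i then e i else 0)) = (1 + (if P i0 then e i0 else 0)) *
     (\<Prod>i\<in>I - {i0}. 1 + (if P i then e i else 0))"
    using assms(1,2) by (rule prod.remove)
  also have "(\<Prod>i\<in>I - {i0}. 1 + (if P i then e i else 0)) = 1"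
    using assms(3) by (intro prod.neutral) auto
  finally show ?thesis using assms(4) by simp
qed

lemma prod_none:
  fixes e :: "nat \<Rightarrow> real"
  assumes "\<And>i. i \<in> I \<Longrightarrow> \<not> P i"
  shows "(\<Prod>i\<in>I. 1 + (if P i then e i else 0)) = 1"
  using assms by (intro prod.neutral) auto

locale cons =
  fixes N :: nat and p :: "(nat \<Rightarrow> real) \<Rightarrow> real" and \<delta> :: real
  assumes dist: "is_distribution (binvecs (Suc N)) p" and dpos: "\<delta> > 0"
begin

definition m :: nat where "m = 2^N - (1::nat)"
definition y :: "nat \<Rightarrow> nat \<Rightarrow> real" where "y i j = (of_bool (bit (Suc i) (j-1)) :: real)"
definition dec :: "real \<Rightarrow> nat \<Rightarrow> nat \<Rightarrow> real" where "dec t k = (\<lambda>j. if j = 0 then t else if j < Suc N then of_bool (bit k (j-1)) else undefined)"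
definition g :: "(nat \<Rightarrow> real) \<Rightarrow> real" where "g v = p v + \<delta>"
definition K0 :: real where "K0 = 1 / g (dec 0 0)"
definition bet :: real where "bet = ln (g (dec 1 0) / g (dec 0 0))"
definition w :: "nat \<Rightarrow> real" where "w i = (\<Sum>j\<in>{1..<Suc N}. y i j)"
definition mu :: real where "mu = ln (2 * (1 + \<delta>) * (1 + exp bet) / \<delta>)"
definition A0 :: "nat \<Rightarrow> real" where "A0 i = ln (K0 * g (dec 0 (Suc i)) * exp (mu * w i) - 1)"
definition A1 :: "nat \<Rightarrow> real" where "A1 i = ln (K0 * g (dec 1 (Suc i)) * exp (mu * w i) / exp bet - 1)"
definition bb :: "nat \<Rightarrow> real" where "bb i = A1 i - A0 i"
definition Wp :: "real \<Rightarrow> nat \<Rightarrow> nat \<Rightarrow> real" where "Wp l i j = (if j = 0 then bb i else l * (2 * y i j - 1))"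
definition Cp :: "real \<Rightarrow> nat \<Rightarrow> real" where "Cp l i = A0 i - l * w i"
definition Bp :: "nat \<Rightarrow> real" where "Bp j = (if j = 0 then bet else - mu)"
definition d :: "nat \<Rightarrow> (nat \<Rightarrow> real) \<Rightarrow> real" where "d i v = (\<Sum>j\<in>{1..<Suc N}. (y i j - v j)^2)"
definition Fl :: "real \<Rightarrow> (nat \<Rightarrow> real) \<Rightarrow> real" where "Fl l v = exp (bet * v 0 - mu * (\<Sum>j\<in>{1..<Suc N}. v j)) *
   (\<Prod>i<m. 1 + exp (bb i * v 0 + A0 i - l * d i v))"
definition L :: "(nat \<Rightarrow> real) \<Rightarrow> real" where "L v = exp (bet * v 0 - mu * (\<Sum>j\<in>{1..<Suc N}. v j)) *
   (\<Prod>i<m. 1 + (if d i v = 0 then exp (bb i * v 0 + A0 i) else 0))"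

lemma vmem: "v \<in> binvecs (Suc N) \<Longrightarrow> j < Suc N \<Longrightarrow> v j = 0 \<or> v j = 1"
  unfolding binvecs_def by auto

lemma dec_mem: "t = 0 \<or> t = 1 \<Longrightarrow> dec t k \<in> binvecs (Suc N)"
  unfolding binvecs_def dec_def by (auto simp: PiE_iff extensional_def)

lemma p_nonneg: "v \<in> binvecs (Suc N) \<Longrightarrow> p v \<ge> 0"
  using dist unfolding is_distribution_def by auto

lemma p_le1: "v \<in> binvecs (Suc N) \<Longrightarrow> p v \<le> 1"
proof -
  assume v: "v \<in> binvecs (Suc N)"
  have "p v \<le> sum p (binvecs (Suc N))"
    by (rule member_le_sum) (use v p_nonneg finite_binvecs in auto)
  thus ?thesis using dist unfolding is_distribution_def by simp
qed

lemma g_bounds: "v \<in> binvecs (Suc N) \<Longrightarrow> g v \<ge> \<delta> \<and> g v \<le> 1 + \<delta>"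
  using p_nonneg p_le1 unfolding g_def by force

lemma K0_pos: "K0 > 0" and K0_ge: "K0 \<ge> 1 / (1 + \<delta>)"
proof -
  have "g (dec 0 0) \<ge> \<delta>" "g (dec 0 0) \<le> 1 + \<delta>" using g_bounds dec_mem by auto
  thus "K0 > 0" "K0 \<ge> 1 / (1 + \<delta>)" unfolding K0_def using dpos by (auto intro: frac_le)
qed

lemma exp_mu: "exp mu = 2 * (1 + \<delta>) * (1 + exp bet) / \<delta>"
  unfolding mu_def using dpos by (intro exp_ln divide_pos_pos mult_pos_pos) (auto intro: add_pos_pos)

lemma mu_nonneg: "mu \<ge> 0"
proof -
  have "2 * (1 + \<delta>) * (1 + exp bet) / \<delta> \<ge> 1"
  proof -
    have "2 * (1 + \<delta>) * (1 + exp bet) \<ge> \<delta>" using dpos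
      by (smt (verit) exp_gt_zero mult_le_cancel_left1 mult_pos_pos)
    thus ?thesis using dpos by simp
  qed
  thus ?thesis using exp_mu by (metis exp_le_cancel_iff exp_zero)
qed

lemma i_bound: "i < m \<Longrightarrow> Suc i < 2^N"
  unfolding m_def by simp

lemma w_ge1: "i < m \<Longrightarrow> w i \<ge> 1"
proof -
  assume i: "i < m"
  have "tailv N (Suc i) \<noteq> tailv N 0"
    using tailv_inj[of "Suc i" N 0] i_bound[OF i] by auto
  then obtain j where j: "tailv N (Suc i) j \<noteq> tailv N 0 j" by auto
  hence j1: "j \<in> {1..<Suc N}" unfolding tailv_def by (auto split: if_splits)
  hence "y i j = 1" using j unfolding tailv_def y_def by auto
  moreover have "y i j \<le> w i" unfolding w_def
    by (rule member_le_sum) (use j1 in \<open>auto simp: y_def\<close>)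
  ultimately show ?thesis by simp
qed

lemma key: assumes "i < m" "t = 0 \<or> t = 1"
  shows "K0 * g (dec t (Suc i)) * exp (mu * w i) \<ge> 2 * (1 + exp bet)"
proof -
  have ge: "g (dec t (Suc i)) \<ge> \<delta>" using g_bounds dec_mem[OF assms(2)] by auto
  have "exp (mu * w i) \<ge> exp mu" using w_ge1[OF assms(1)] mu_nonneg
    by (simp add: mult_left_mono[of 1 "w i" mu, simplified])
  have "2 * (1 + exp bet) = (1 / (1 + \<delta>)) * \<delta> * exp mu"
  proof -
    have ne: "1 + \<delta> \<noteq> 0" "\<delta> \<noteq> 0" "\<delta> + \<delta> * \<delta> \<noteq> 0" using dpos by (auto, smt (verit) mult_pos_pos)
    show ?thesis unfolding exp_mu using ne by (simp add: field_simps)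
  qed
  also have "\<dots> \<le> K0 * g (dec t (Suc i)) * exp (mu * w i)"
    using K0_ge K0_pos ge \<open>exp (mu * w i) \<ge> exp mu\<close> dpos
    by (intro mult_mono) auto
  finally show ?thesis .
qed

lemma Ffun_eq: assumes v: "v \<in> binvecs (Suc N)"
  shows "Ffun (Suc N) m (Wp l) Bp (Cp l) v = Fl l v"
proof -
  have b: "(\<Sum>j<Suc N. Bp j * v j) = bet * v 0 - mu * (\<Sum>j\<in>{1..<Suc N}. v j)"
  proof -
    have "(\<Sum>j\<in>{1..<Suc N}. Bp j * v j) = -mu * (\<Sum>j\<in>{1..<Suc N}. v j)"
      unfolding sum_distrib_left by (intro sum.cong) (auto simp: Bp_def)
    thus ?thesis unfolding sum_split0 by (simp add: Bp_def)
  qed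
  have t: "l * (2 * y i j - 1) * v j - l * y i j = - (l * (y i j - v j)^2)"
    if "j \<in> {1..<Suc N}" for i j
    using vmem[OF v, of j] that unfolding y_def
    by (cases "bit (Suc i) (j - 1)") (auto simp: power2_eq_square algebra_simps)
  have a: "(\<Sum>j<Suc N. Wp l i j * v j) + Cp l i = bb i * v 0 + A0 i - l * d i v" for i
  proof -
    have s1: "(\<Sum>j\<in>{1..<Suc N}. Wp l i j * v j) = (\<Sum>j\<in>{1..<Suc N}. l * (2 * y i j - 1) * v j)"
      by (intro sum.cong) (auto simp: Wp_def)
    have s2: "Cp l i = A0 i - (\<Sum>j\<in>{1..<Suc N}. l * y i j)"
      unfolding Cp_def w_def sum_distrib_left ..
    have w0: "Wp l i 0 = bb i" by (simp add: Wp_def)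
    have "(\<Sum>j<Suc N. Wp l i j * v j) + Cp l i
        = bb i * v 0 + A0 i + (\<Sum>j\<in>{1..<Suc N}. l * (2 * y i j - 1) * v j - l * y i j)"
      unfolding sum_split0 s1 s2 sum_subtractf w0 by linarith
    also have "(\<Sum>j\<in>{1..<Suc N}. l * (2 * y i j - 1) * v j - l * y i j)
        = (\<Sum>j\<in>{1..<Suc N}. - (l * (y i j - v j)^2))"
      using t by (intro sum.cong) auto
    also have "\<dots> = - (l * d i v)" unfolding d_def sum_negf sum_distrib_left ..
    finally show ?thesis by linarith
  qed
  show ?thesis unfolding Ffun_def Fl_def b a ..
qed

lemma Fl_lim: "((\<lambda>l. Fl l v) \<longlongrightarrow> L v) at_top"
proof -
  have "((\<lambda>l. exp (bb i * v 0 + A0 i - l * d i v)) \<longlongrightarrow>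
          (if d i v = 0 then exp (bb i * v 0 + A0 i) else 0)) at_top" for i
  proof (cases "d i v = 0")
    case True thus ?thesis by simp
  next
    case False
    have "d i v \<ge> 0" unfolding d_def by (intro sum_nonneg) auto
    hence "d i v > 0" using False by simp
    thus ?thesis using False exp_lim0 by simp
  qed
  thus ?thesis unfolding Fl_def L_def
    by (intro tendsto_mult tendsto_const tendsto_prod tendsto_add)
qed

definition mt :: "nat \<Rightarrow> (nat \<Rightarrow> real) \<Rightarrow> bool" where
  "mt k v \<longleftrightarrow> (\<forall>j\<in>{1..<Suc N}. v j = of_bool (bit k (j-1)))"

lemma d_zero_iff: "d i v = 0 \<longleftrightarrow> mt (Suc i) v"
proof -
  have "d i v = 0 \<longleftrightarrow> (\<forall>j\<in>{1..<Suc N}. (y i j - v j)^2 = 0)"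
    unfolding d_def by (rule sum_nonneg_eq_0_iff) auto
  thus ?thesis unfolding mt_def y_def by auto
qed

lemma mt_unique: assumes "v \<in> binvecs (Suc N)" "mt k v" "mt k' v" "k < 2^N" "k' < 2^N"
  shows "k = k'"
proof (rule tailv_inj[OF assms(4,5)])
  show "tailv N k = tailv N k'"
  proof
    fix j
    show "tailv N k j = tailv N k' j"
    proof (cases "j \<in> {1..<Suc N}")
      case True
      have "v j = of_bool (bit k (j-1))" "v j = of_bool (bit k' (j-1))"
        using assms(2,3) True unfolding mt_def by blast+
      thus ?thesis using True unfolding tailv_def by simp
    next
      case False
      show ?thesis unfolding tailv_def by (simp only: False if_False)
    qed
  qed
qed

lemma mt_exists: assumes "v \<in> binvecs (Suc N)" shows "\<exists>k<2^N. mt k v"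
proof -
  have "restrict v {1..<Suc N} \<in> {1..<Suc N} \<rightarrow>\<^sub>E {0,1::real}"
  proof (subst restrict_PiE_iff, intro ballI)
    fix j assume "j \<in> {1..<Suc N}"
    hence "j < Suc N" by simp
    thus "v j \<in> {0, 1}" using vmem[OF assms] by blast
  qed
  then obtain k where k: "k < 2^N" "tailv N k = restrict v {1..<Suc N}"
    using tailv_surj by blast
  have "mt k v" unfolding mt_def
  proof
    fix j assume j: "j \<in> {1..<Suc N}"
    have "tailv N k j = restrict v {1..<Suc N} j" using k(2) by simp
    thus "v j = of_bool (bit k (j - 1))" using j unfolding tailv_def by simp
  qed
  thus ?thesis using k(1) by blast
qed

lemma mt_dec: assumes "v \<in> binvecs (Suc N)" "mt k v" shows "v = dec (v 0) k"
proof
  fix j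
  show "v j = dec (v 0) k j"
  proof (cases "j = 0")
    case False
    show ?thesis
    proof (cases "j < Suc N")
      case True
      have "v j = of_bool (bit k (j - 1))" using assms(2) True False unfolding mt_def by simp
      thus ?thesis using True False unfolding dec_def by simp
    next
      case F2: False
      have "v j = undefined" using assms(1) F2 unfolding binvecs_def by (intro PiE_arb[where S="{0..<Suc N}"]) auto
      thus ?thesis using False F2 unfolding dec_def by auto
    qed
  qed (simp add: dec_def)
qed

lemma g_pos: "v \<in> binvecs (Suc N) \<Longrightarrow> g v > 0"
  using g_bounds dpos by force

lemma L_eq: assumes v: "v \<in> binvecs (Suc N)" shows "L v = K0 * g v"
proof -
  obtain k where k: "k < 2^N" "mt k v" using mt_exists[OF v] by blast
  have v0: "v 0 = 0 \<or> v 0 = 1" using vmem[OF v, of 0] by simp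
  show ?thesis
  proof (cases "k = 0")
    case True
    have mz: "mt 0 v" using k(2) unfolding True .
    have none: "\<not> d i v = 0" if "i \<in> {..<m}" for i
    proof
      assume "d i v = 0"
      hence mi: "mt (Suc i) v" unfolding d_zero_iff .
      have "Suc i < 2^N" using i_bound that by simp
      hence "Suc i = k" by (rule mt_unique[OF v mi k(2) _ k(1)])
      thus False using True by simp
    qed
    have p1: "(\<Prod>i<m. 1 + (if d i v = 0 then exp (bb i * v 0 + A0 i) else 0)) = 1"
      by (rule prod_none[where P="\<lambda>i. d i v = 0"]) (use none in blast)
    have s0: "(\<Sum>j\<in>{1..<Suc N}. v j) = 0"
    proof (rule sum.neutral, rule ballI)
      fix j assume "j \<in> {1..<Suc N}"
      hence "v j = of_bool (bit (0::nat) (j - 1))" using mz unfolding mt_def by blast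
      thus "v j = 0" by simp
    qed
    have vd: "v = dec (v 0) 0" using mt_dec[OF v mz] .
    have L1: "L v = exp (bet * v 0)" unfolding L_def p1 s0 by simp
    have gp: "g (dec 0 0) > 0" "g (dec 1 0) > 0" using g_pos dec_mem by auto
    from v0 show ?thesis
    proof
      assume h: "v 0 = 0"
      have "g v = g (dec 0 0)" using arg_cong[OF vd, of g] h by simp
      thus ?thesis using L1 h gp(1) unfolding K0_def by simp
    next
      assume h: "v 0 = 1"
      have "g v = g (dec 1 0)" using arg_cong[OF vd, of g] h by simp
      moreover have "exp bet = g (dec 1 0) / g (dec 0 0)" unfolding bet_def using gp by simp
      ultimately show ?thesis using L1 h unfolding K0_def by simp
    qed
  next
    case False
    define i where "i = k - 1"
    have ki: "k = Suc i" using False unfolding i_def by simp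
    have im: "i < m" using k(1) ki unfolding m_def by simp
    have dz: "d i v = 0" using k(2) unfolding ki d_zero_iff .
    have uniq: "i' = i" if "i' \<in> {..<m}" "d i' v = 0" for i'
    proof -
      have mi: "mt (Suc i') v" using that(2) unfolding d_zero_iff .
      have "Suc i' < 2^N" using i_bound that(1) by simp
      hence "Suc i' = k" by (rule mt_unique[OF v mi k(2) _ k(1)])
      thus ?thesis using ki by simp
    qed
    have p1: "(\<Prod>i<m. 1 + (if d i v = 0 then exp (bb i * v 0 + A0 i) else 0)) = 1 + exp (bb i * v 0 + A0 i)"
      by (rule prod_unique[where P="\<lambda>i. d i v = 0", OF finite_lessThan _ uniq dz]) (use im in simp_all)
    have mS: "mt (Suc i) v" using k(2) unfolding ki .
    have sw: "(\<Sum>j\<in>{1..<Suc N}. v j) = w i"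
      unfolding w_def
    proof (rule sum.cong[OF refl])
      fix j assume "j \<in> {1..<Suc N}"
      thus "v j = y i j" using mS unfolding mt_def y_def by blast
    qed
    have vd: "v = dec (v 0) (Suc i)" using mt_dec[OF v k(2)] unfolding ki .
    have L1: "L v = exp (bet * v 0 - mu * w i) * (1 + exp (bb i * v 0 + A0 i))"
      unfolding L_def p1 sw ..
    from v0 show ?thesis
    proof
      assume h: "v 0 = 0"
      define X where "X = K0 * g (dec 0 (Suc i)) * exp (mu * w i)"
      have X: "X \<ge> 2 * (1 + exp bet)" unfolding X_def using key[OF im] by simp
      hence "X - 1 > 0" by (smt (verit) exp_gt_zero)
      hence eA: "exp (A0 i) = X - 1" unfolding A0_def X_def by simp
      have "L v = exp (- (mu * w i)) * X" unfolding L1 h by (simp add: eA)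
      also have "\<dots> = K0 * g (dec 0 (Suc i))" unfolding X_def
        by (simp add: exp_minus field_simps)
      moreover have "g v = g (dec 0 (Suc i))" using arg_cong[OF vd, of g] h by simp
      ultimately show ?thesis by simp
    next
      assume h: "v 0 = 1"
      define X where "X = K0 * g (dec 1 (Suc i)) * exp (mu * w i)"
      have X: "X \<ge> 2 * (1 + exp bet)" unfolding X_def using key[OF im] by simp
      hence "X > exp bet" by (smt (verit) exp_gt_zero)
      hence "X / exp bet - 1 > 0" by (simp add: field_simps)
      hence eA: "exp (A1 i) = X / exp bet - 1" unfolding A1_def X_def by simp
      have ab: "bb i * 1 + A0 i = A1 i" unfolding bb_def by simp
      have "L v = exp (bet - mu * w i) * (X / exp bet)" unfolding L1 h ab eA by simp
      also have "\<dots> = K0 * g (dec 1 (Suc i))" unfolding X_def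
        by (simp add: exp_diff field_simps)
      moreover have "g v = g (dec 1 (Suc i))" using arg_cong[OF vd, of g] h by simp
      ultimately show ?thesis by simp
    qed
  qed
qed

end



theorem corollary1:
  fixes n :: nat and p :: "(nat \<Rightarrow> real) \<Rightarrow> real" and \<epsilon> :: real
  assumes "n \<ge> 1"
    and "is_distribution (binvecs n) p"
    and "\<epsilon> > 0"
  shows "\<exists>(W :: nat \<Rightarrow> nat \<Rightarrow> real) (B :: nat \<Rightarrow> real) (C :: nat \<Rightarrow> real).
           KL_div (binvecs n) p (rbm_marginal n (2 ^ n div 2 - 1) W B C) < \<epsilon>"
proof -
  obtain N where nN: "n = Suc N" using assms(1) by (cases n) auto
  define \<delta> where "\<delta> = (exp (\<epsilon>/2) - 1) / (2 * 2^n)"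
  have e1: "exp (\<epsilon>/2) > 1" using assms(3) by simp
  have dpos: "\<delta> > 0" unfolding \<delta>_def using e1 by simp
  interpret cons N p \<delta>
    using assms(2) dpos nN by unfold_locales simp_all
  have mm: "2 ^ n div 2 - 1 = m" unfolding m_def nN by simp
  have fin: "finite (binvecs n)" by (rule finite_binvecs)
  have ev: "\<forall>\<^sub>F l in at_top. \<forall>v\<in>binvecs n. K0 * p v < Fl l v \<and> Fl l v < K0 * (p v + 2 * \<delta>)"
  proof (rule eventually_ball_finite[OF fin], rule ballI)
    fix v assume v: "v \<in> binvecs n"
    have Lv: "L v = K0 * (p v + \<delta>)" using L_eq v nN unfolding g_def by simp
    have lim: "((\<lambda>l. Fl l v) \<longlongrightarrow> K0 * (p v + \<delta>)) at_top" using Fl_lim[of v] unfolding Lv .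
    have "K0 * p v < K0 * (p v + \<delta>)" using K0_pos dpos by simp
    moreover have "K0 * (p v + \<delta>) < K0 * (p v + 2 * \<delta>)" using K0_pos dpos by simp
    ultimately show "\<forall>\<^sub>F l in at_top. K0 * p v < Fl l v \<and> Fl l v < K0 * (p v + 2 * \<delta>)"
      using order_tendstoD[OF lim] by (auto intro: eventually_conj)
  qed
  then obtain L0 where "\<forall>l\<ge>L0. \<forall>v\<in>binvecs n. K0 * p v < Fl l v \<and> Fl l v < K0 * (p v + 2 * \<delta>)"
    unfolding eventually_at_top_linorder by blast
  then obtain l where l: "\<forall>v\<in>binvecs n. K0 * p v < Fl l v \<and> Fl l v < K0 * (p v + 2 * \<delta>)"
    by blast
  have FF: "Ffun n m (Wp l) Bp (Cp l) v = Fl l v" if "v \<in> binvecs n" for v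
    using Ffun_eq that nN by simp
  have q: "rbm_marginal n m (Wp l) Bp (Cp l) v = Fl l v / sum (Fl l) (binvecs n)"
    if "v \<in> binvecs n" for v
  proof -
    have ss: "(\<Sum>u\<in>binvecs n. Ffun n m (Wp l) Bp (Cp l) u) = sum (Fl l) (binvecs n)"
      by (rule sum.cong[OF refl FF])
    show ?thesis unfolding marginal_eq FF[OF that] ss ..
  qed
  have kl: "KL_div (binvecs n) p (rbm_marginal n m (Wp l) Bp (Cp l))
        = KL_div (binvecs n) p (\<lambda>v. Fl l v / sum (Fl l) (binvecs n))"
    unfolding KL_div_def by (rule sum.cong[OF refl]) (simp only: q)
  have card: "card (binvecs n) = 2^n"
    unfolding binvecs_def by (simp add: card_PiE numeral_2_eq_2)
  have sumb: "sum (Fl l) (binvecs n) \<le> K0 * exp (\<epsilon>/2)"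
  proof -
    have "sum (Fl l) (binvecs n) \<le> (\<Sum>v\<in>binvecs n. K0 * (p v + 2 * \<delta>))"
      using l by (intro sum_mono) (auto intro: less_imp_le)
    also have "\<dots> = K0 * (sum p (binvecs n) + 2 * \<delta> * card (binvecs n))"
      by (simp only: sum_distrib_left[symmetric] sum.distrib sum_constant) (simp add: algebra_simps)
    also have "\<dots> = K0 * exp (\<epsilon>/2)"
      using assms(2) unfolding is_distribution_def card \<delta>_def by (simp add: field_simps)
    finally show ?thesis .
  qed
  have "KL_div (binvecs n) p (\<lambda>v. Fl l v / sum (Fl l) (binvecs n)) < \<epsilon>"
  proof (rule kl_bound[OF fin assms(2) K0_pos])
    fix v assume v: "v \<in> binvecs n"
    show "Fl l v > 0" using Ffun_pos FF[OF v] by metis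
    show "K0 * p v \<le> Fl l v" using l v by (auto intro: less_imp_le)
  qed (use sumb assms(3) in auto)
  hence "KL_div (binvecs n) p (rbm_marginal n m (Wp l) Bp (Cp l)) < \<epsilon>" unfolding kl .
  thus ?thesis unfolding mm by blast
qed


end
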